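(* Let $n$ be odd, $p\ge1$, $q=2^{p+1}$, and let $f:\mathbb{Z}_2^n\to\mathbb{Z}_q$ satisfy $f(x)\equiv 2^p a(x)+\sum_{j=0}^{p-1}2^ja_j(x)\pmod q$ for Boolean functions $a,a_0,\dots,a_{p-1}$ on $\mathbb{Z}_2^n$. For $i\in\{0,\dots,2^p-1\}$ let $g_i=a\oplus z_{i,0}a_0\oplus\cdots\oplus z_{i,p-1}a_{p-1}$ and for $u\in\mathbb{Z}_2^n$ let $W(u)=(W_{g_0}(u),\dots,W_{g_{2^p-1}}(u))$. Suppose every $g_i$ is semi-bent and that for every $u\in\mathbb{Z}_2^n$ there exist $r\in\{0,\dots,2^{p-1}-1\}$ and $\epsilon\in\{\pm1\}$ such that either $W(u)=(\epsilon\sqrt2\,H^{(r)}_{2^{p-1}},\mathbf{0}_{2^{p-1}})$ or $W(u)=(\mathbf{0}_{2^{p-1}},\epsilon\sqrt2\,H^{(r)}_{2^{p-1}})$ (concatenations of vectors of length $2^{p-1}$, $\mathbf{0}_{2^{p-1}}$ the all-zero vector). Then $f$ is generalized bent.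
   Context: For $i\in\{0,\dots,2^m-1\}$, $z_i=(z_{i,0},\dots,z_{i,m-1})\in\mathbb{Z}_2^m$ is the binary vector with $i=\sum_j z_{i,j}2^j$. $H_{2^m}$ is the Sylvester–Hadamard matrix with entries $(H_{2^m})_{k,i}=(-1)^{z_k\cdot z_i}$, and $H^{(r)}_{2^m}$ its $r$-th row. $W_g(u)=2^{-n/2}\sum_{x\in\mathbb{Z}_2^n}(-1)^{g(x)\oplus u\cdot x}$; for odd $n$, $g$ is semi-bent if $W_g(u)\in\{0,\pm\sqrt2\}$ for all $u$. With $\zeta=e^{2\pi\mathrm{i}/q}$, $\mathcal{H}_f(u)=2^{-n/2}\sum_{x}\zeta^{f(x)}(-1)^{u\cdot x}$, and $f$ is generalized bent if $|\mathcal{H}_f(u)|=1$ for all $u$. *)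

theory Defs
  imports "HOL-Analysis.Analysis"
begin

text \<open>Vectors of Z_2^n are represented as functions nat => bool vanishing outside {0..<n}.\<close>
definition cube :: "nat \<Rightarrow> (nat \<Rightarrow> bool) set" where
  "cube n = {x. \<forall>j. n \<le> j \<longrightarrow> \<not> x j}"

definition dotp :: "nat \<Rightarrow> (nat \<Rightarrow> bool) \<Rightarrow> (nat \<Rightarrow> bool) \<Rightarrow> bool" where
  "dotp n u x = odd (card {j. j < n \<and> u j \<and> x j})"

definition b2i :: "bool \<Rightarrow> nat" where
  "b2i b = (if b then 1 else 0)"

definition walsh :: "nat \<Rightarrow> ((nat \<Rightarrow> bool) \<Rightarrow> bool) \<Rightarrow> (nat \<Rightarrow> bool) \<Rightarrow> real" where
  "walsh n g u = (1 / sqrt (2 ^ n)) *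
     (\<Sum>x\<in>cube n. (-1::real) ^ (b2i (g x \<noteq> dotp n u x)))"

definition semi_bent :: "nat \<Rightarrow> ((nat \<Rightarrow> bool) \<Rightarrow> bool) \<Rightarrow> bool" where
  "semi_bent n g \<longleftrightarrow> (\<forall>u\<in>cube n. walsh n g u \<in> {0, sqrt 2, - sqrt 2})"

definition gen_walsh :: "nat \<Rightarrow> nat \<Rightarrow> ((nat \<Rightarrow> bool) \<Rightarrow> int) \<Rightarrow> (nat \<Rightarrow> bool) \<Rightarrow> complex" where
  "gen_walsh q n f u = (1 / complex_of_real (sqrt (2 ^ n))) *
     (\<Sum>x\<in>cube n. cis (2 * pi * real_of_int (f x) / real q) * (-1) ^ (b2i (dotp n u x)))"

definition gen_bent :: "nat \<Rightarrow> nat \<Rightarrow> ((nat \<Rightarrow> bool) \<Rightarrow> int) \<Rightarrow> bool" where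
  "gen_bent q n f \<longleftrightarrow> (\<forall>u\<in>cube n. cmod (gen_walsh q n f u) = 1)"

text \<open>z_{i,j}: the j-th binary digit of i.\<close>
definition zbit :: "nat \<Rightarrow> nat \<Rightarrow> bool" where
  "zbit i j = odd (i div 2 ^ j)"

text \<open>Entry (k,i) of the Sylvester-Hadamard matrix H_{2^m}: (-1)^(z_k . z_i).\<close>
definition hadamard :: "nat \<Rightarrow> nat \<Rightarrow> nat \<Rightarrow> real" where
  "hadamard m k i = (-1) ^ card {j. j < m \<and> zbit k j \<and> zbit i j}"

end

theory Submission
  imports Defs
begin

lemma sum_split_2: "(\<Sum>i<2*(N::nat). F i) = (\<Sum>i<N. F (2*i)) + (\<Sum>i<N. (F (2*i+1) :: 'a::comm_monoid_add))"
  by (induction N) (simp_all add: ac_simps)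

lemma sum_split_add: "(\<Sum>i<N+(K::nat). F i) = (\<Sum>i<N. F i) + (\<Sum>i<K. (F (N+i) :: 'a::comm_monoid_add))"
  by (induction K) (simp_all add: ac_simps)

lemma zbit_even0: "zbit (2*i) 0 = False" by (simp add: zbit_def)
lemma zbit_odd0: "zbit (Suc (2*i)) 0 = True" by (simp add: zbit_def)
lemma zbit_Suc: "t < 2 \<Longrightarrow> zbit (2*i+t) (Suc j) = zbit i j"
proof -
  assume t: "t < 2"
  have "(2*i+t) div 2^(Suc j) = ((2*i+t) div 2) div 2^j"
    by (simp add: div_mult2_eq)
  also have "(2*i+t) div 2 = i" using t by simp
  finally show ?thesis by (simp add: zbit_def)
qed

lemma prod_sum_bits:
  fixes h :: "nat \<Rightarrow> bool \<Rightarrow> 'a::comm_semiring_1"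
  shows "(\<Sum>i<2^m. \<Prod>j<m. h j (zbit i j)) = (\<Prod>j<m. h j False + h j True)"
proof (induction m arbitrary: h)
  case 0 then show ?case by simp
next
  case (Suc m)
  have e: "(\<Prod>j<Suc m. h j (zbit (2*i) j)) = h 0 False * (\<Prod>j<m. h (Suc j) (zbit i j))" for i
    using zbit_Suc[of 0 i] by (simp add: prod.lessThan_Suc_shift zbit_even0 del: prod.lessThan_Suc)
  have o: "(\<Prod>j<Suc m. h j (zbit (2*i+1) j)) = h 0 True * (\<Prod>j<m. h (Suc j) (zbit i j))" for i
    using zbit_Suc[of 1 i] by (simp add: prod.lessThan_Suc_shift zbit_odd0 del: prod.lessThan_Suc)
  have "(\<Sum>i<2^Suc m. \<Prod>j<Suc m. h j (zbit i j))
     = (\<Sum>i<2^m. \<Prod>j<Suc m. h j (zbit (2*i) j)) + (\<Sum>i<2^m. \<Prod>j<Suc m. h j (zbit (2*i+1) j))"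
    by (simp add: sum_split_2)
  also have "\<dots> = (h 0 False + h 0 True) * (\<Sum>i<2^m. \<Prod>j<m. h (Suc j) (zbit i j))"
    unfolding e o by (simp add: sum_distrib_left distrib_right sum.distrib del: prod.lessThan_Suc)
  also have "\<dots> = (h 0 False + h 0 True) * (\<Prod>j<m. h (Suc j) False + h (Suc j) True)"
    using Suc.IH[of "\<lambda>j. h (Suc j)"] by simp
  also have "\<dots> = (\<Prod>j<Suc m. h j False + h j True)"
    by (simp add: prod.lessThan_Suc_shift del: prod.lessThan_Suc)
  finally show ?case .
qed

definition sg :: "bool \<Rightarrow> complex" where "sg b = (if b then -1 else 1)"

lemma card_sign: "(-1::'a::comm_ring_1) ^ card {j. j < (m::nat) \<and> P j} = (\<Prod>j<m. if P j then -1 else 1)"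
proof (induction m)
  case 0 then show ?case by simp
next
  case (Suc m)
  have "{j. j < Suc m \<and> P j} = (if P m then insert m {j. j < m \<and> P j} else {j. j < m \<and> P j})"
    by (auto simp: less_Suc_eq)
  then show ?case using Suc by (simp add: mult.commute)
qed

lemma key_identity:
  fixes w :: "nat \<Rightarrow> complex" and B :: "nat \<Rightarrow> bool"
  shows "(\<Sum>i<2^m. (\<Prod>j<m. 1 + w j * sg (zbit i j)) * (\<Prod>j<m. sg (zbit i j \<and> B j)))
        = 2^m * (\<Prod>j<m. if B j then w j else 1)"
proof -
  have "(\<Sum>i<2^m. (\<Prod>j<m. 1 + w j * sg (zbit i j)) * (\<Prod>j<m. sg (zbit i j \<and> B j)))
     = (\<Sum>i<2^m. \<Prod>j<m. (1 + w j * sg (zbit i j)) * sg (zbit i j \<and> B j))"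
    by (simp add: prod.distrib)
  also have "\<dots> = (\<Prod>j<m. (1 + w j * sg False) * sg (False \<and> B j) + (1 + w j * sg True) * sg (True \<and> B j))"
    by (rule prod_sum_bits[where h="\<lambda>j z. (1 + w j * sg z) * sg (z \<and> B j)"])
  also have "\<dots> = (\<Prod>j<m. 2 * (if B j then w j else 1))"
    by (rule prod.cong) (auto simp: sg_def algebra_simps)
  also have "\<dots> = 2^m * (\<Prod>j<m. if B j then w j else 1)"
    by (simp add: prod.distrib)
  finally show ?thesis .
qed

lemma sg_xor_odd: "sg (A \<noteq> odd k) = sg A * (-1) ^ k"
  by (auto simp: sg_def)

lemma sg_card: "(-1::complex) ^ card {j. j < (m::nat) \<and> P j} = (\<Prod>j<m. sg (P j))"
  unfolding card_sign sg_def by simp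

lemma pointwise:
  fixes w :: "nat \<Rightarrow> complex"
  shows "sg A * (\<Prod>j<m. if B j then w j else 1)
   = (1/2^m) * (\<Sum>i<2^m. (\<Prod>j<m. 1 + w j * sg (zbit i j)) * sg (A \<noteq> odd (card {j. j<m \<and> zbit i j \<and> B j})))"
proof -
  have "(\<Sum>i<2^m. (\<Prod>j<m. 1 + w j * sg (zbit i j)) * sg (A \<noteq> odd (card {j. j<m \<and> zbit i j \<and> B j})))
    = sg A * (\<Sum>i<2^m. (\<Prod>j<m. 1 + w j * sg (zbit i j)) * (\<Prod>j<m. sg (zbit i j \<and> B j)))"
    unfolding sg_xor_odd sg_card[where P="\<lambda>j. zbit _ j \<and> B j", simplified]
    by (simp add: sum_distrib_left ac_simps)
  also have "\<dots> = sg A * (2^m * (\<Prod>j<m. if B j then w j else 1))"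
    by (simp add: key_identity)
  finally show ?thesis by simp
qed

lemma cis_sum: "cis (\<Sum>j<(p::nat). F j) = (\<Prod>j<p. cis (F j))"
  by (induction p) (simp_all add: cis_mult[symmetric])

lemma cis_decomp:
  fixes p :: nat and fx :: int
  assumes "fx mod 2 ^ (p + 1) = (2 ^ p * int (b2i A) + (\<Sum>j<p. 2 ^ j * int (b2i (B j)))) mod 2 ^ (p + 1)"
  shows "cis (2 * pi * real_of_int fx / real (2 ^ (p + 1)))
       = sg A * (\<Prod>j<p. if B j then cis (2*pi*2^j / 2^(p+1)) else 1)"
proof -
  define R where "R = 2 ^ p * int (b2i A) + (\<Sum>j<p. 2 ^ j * int (b2i (B j)))"
  define Q :: int where "Q = 2 ^ (p+1)"
  have "Q dvd fx - R" using assms unfolding R_def Q_def by (simp add: mod_eq_dvd_iff)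
  then obtain t where t: "fx = R + Q * t" by (metis add_diff_cancel_left' diff_add_cancel dvd_def)
  have Qr: "real (2 ^ (p + 1)) = real_of_int Q" by (simp add: Q_def)
  have Qpos: "real_of_int Q > 0" by (simp add: Q_def)
  have "2 * pi * real_of_int fx / real (2 ^ (p + 1)) = 2 * pi * real_of_int R / real_of_int Q + 2 * pi * real_of_int t"
    using Qpos unfolding t Qr by (simp add: field_simps)
  then have "cis (2 * pi * real_of_int fx / real (2 ^ (p + 1))) = cis (2 * pi * real_of_int R / real_of_int Q)"
    by (simp add: cis_mult[symmetric])
  also have "2 * pi * real_of_int R / real_of_int Q
     = pi * real (b2i A) + (\<Sum>j<p. (if B j then 2*pi*2^j / 2^(p+1) else 0))"
    unfolding R_def Q_def
    apply (simp add: b2i_def sum_divide_distrib sum_distrib_left field_simps)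
    apply (rule sum.cong, simp)
    apply (simp add: field_simps power_add)
    done
  also have "cis \<dots> = sg A * (\<Prod>j<p. if B j then cis (2*pi*2^j / 2^(p+1)) else 1)"
    by (simp add: cis_mult[symmetric] cis_sum b2i_def sg_def if_distrib cong: if_cong)
  finally show ?thesis .
qed

lemma fin_norm:
  fixes c Z :: complex
  assumes "cmod c = sqrt 2" "cmod Z = sqrt 2 * 2^m"
  shows "cmod ((1/2^(Suc m)) * (c * Z)) = 1"
proof -
  have "cmod ((1/2^(Suc m)) * (c * Z)) = cmod (1/2^(Suc m) :: complex) * (cmod c * cmod Z)"
    by (simp only: norm_mult)
  also have "\<dots> = 1/2^(Suc m) * (sqrt 2 * (sqrt 2 * 2^m))"
    using assms by (simp add: norm_divide norm_power)
  also have "\<dots> = 1" by simp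
  finally show ?thesis .
qed

lemma sg_dot: "sg G * (-1) ^ b2i D = complex_of_real ((-1) ^ b2i (G \<noteq> D))"
  by (auto simp: sg_def b2i_def)

lemma gw_formula:
  fixes alpha :: "nat \<Rightarrow> complex"
  assumes pw: "\<And>x. x \<in> cube n \<Longrightarrow> cis (2 * pi * real_of_int (f x) / real Q)
        = (1/2^p) * (\<Sum>i<N. alpha i * sg (g i x))"
  shows "gen_walsh Q n f u = (1/2^p) * (\<Sum>i<N. alpha i * complex_of_real (walsh n (g i) u))"
proof -
  have "gen_walsh Q n f u = (1 / complex_of_real (sqrt (2 ^ n))) *
     (\<Sum>x\<in>cube n. (1/2^p) * (\<Sum>i<N. alpha i * sg (g i x)) * (-1) ^ (b2i (dotp n u x)))"
    unfolding gen_walsh_def by (simp add: pw)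
  also have "\<dots> = (1/2^p) * (\<Sum>i<N. alpha i * ((1 / complex_of_real (sqrt (2 ^ n))) *
      (\<Sum>x\<in>cube n. sg (g i x) * (-1) ^ (b2i (dotp n u x)))))"
    by (simp add: sum_distrib_left sum_distrib_right sum.swap[of _ "cube n"] ac_simps)
  also have "\<dots> = (1/2^p) * (\<Sum>i<N. alpha i * complex_of_real (walsh n (g i) u))"
    unfolding walsh_def sg_dot by simp
  finally show ?thesis .
qed

lemma zbit_low: "i < 2^m \<Longrightarrow> zbit i m = False"
  by (simp add: zbit_def)

lemma zbit_high: "i < 2^m \<Longrightarrow> zbit (2^m + i) m = True"
  by (simp add: zbit_def)

lemma zbit_high_low: "i < 2^m \<Longrightarrow> j < m \<Longrightarrow> zbit (2^m + i) j = zbit i j"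
proof -
  assume j: "j < m"
  have "2^m = 2^j * (2 * 2^(m - j - 1) :: nat)"
    using j by (simp flip: power_add power_Suc)
  then have "(2^m + i) div 2^j = 2 * 2^(m-j-1) + i div 2^j"
    by simp
  then show ?thesis by (simp add: zbit_def)
qed

theorem theorem4:
  fixes n p :: nat
    and f :: "(nat \<Rightarrow> bool) \<Rightarrow> int"
    and a :: "(nat \<Rightarrow> bool) \<Rightarrow> bool"
    and as :: "nat \<Rightarrow> (nat \<Rightarrow> bool) \<Rightarrow> bool"
    and g :: "nat \<Rightarrow> (nat \<Rightarrow> bool) \<Rightarrow> bool"
  assumes n_odd: "odd n"
    and p_pos: "1 \<le> p"
    and f_decomp: "\<forall>x\<in>cube n. f x mod 2 ^ (p + 1) = (2 ^ p * int (b2i (a x))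
                       + (\<Sum>j<p. 2 ^ j * int (b2i (as j x)))) mod 2 ^ (p + 1)"
    and g_def: "\<forall>i<2 ^ p. \<forall>x\<in>cube n.
                  g i x = (a x \<noteq> odd (card {j. j < p \<and> zbit i j \<and> as j x}))"
    and semibent: "\<forall>i<2 ^ p. semi_bent n (g i)"
    and spectrum: "\<forall>u\<in>cube n. \<exists>r<2 ^ (p - 1). \<exists>\<epsilon>::real. \<epsilon> \<in> {1, -1} \<and>
        ((\<forall>i<2 ^ (p - 1). walsh n (g i) u = \<epsilon> * sqrt 2 * hadamard (p - 1) r i
                          \<and> walsh n (g (2 ^ (p - 1) + i)) u = 0)
       \<or> (\<forall>i<2 ^ (p - 1). walsh n (g i) u = 0
                          \<and> walsh n (g (2 ^ (p - 1) + i)) u = \<epsilon> * sqrt 2 * hadamard (p - 1) r i))"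
  shows "gen_bent (2 ^ (p + 1)) n f"
proof -
  obtain m where pm: "p = Suc m" using p_pos by (cases p) auto
  define w where "w = (\<lambda>j::nat. cis (2*pi*2^j / 2^(p+1)))"
  define alpha where "alpha i = (\<Prod>j<p. 1 + w j * sg (zbit i j))" for i
  define beta where "beta i = (\<Prod>j<m. 1 + w j * sg (zbit i j))" for i
  have pw: "cis (2*pi*real_of_int (f x) / real (2^(p+1))) = (1/2^p) * (\<Sum>i<2^p. alpha i * sg (g i x))"
    if x: "x \<in> cube n" for x
  proof -
    have "cis (2*pi*real_of_int (f x) / real (2^(p+1))) = sg (a x) * (\<Prod>j<p. if as j x then w j else 1)"
      using cis_decomp[of "f x" p "a x" "\<lambda>j. as j x"] f_decomp x unfolding w_def by simp
    also have "\<dots> = (1/2^p) * (\<Sum>i<2^p. alpha i * sg (a x \<noteq> odd (card {j. j<p \<and> zbit i j \<and> as j x})))"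
      unfolding alpha_def by (rule pointwise)
    also have "\<dots> = (1/2^p) * (\<Sum>i<2^p. alpha i * sg (g i x))"
      using g_def x by simp
    finally show ?thesis .
  qed
  have wm: "w m = \<i>"
  proof -
    have "2*pi*2^m / 2^(p+1) = pi / 2" unfolding pm by (simp add: field_simps)
    then show ?thesis unfolding w_def by (metis cis_pi_half)
  qed
  have alo: "alpha i = (1+\<i>) * beta i" if "i < 2^m" for i
    unfolding alpha_def beta_def pm using zbit_low[OF that] wm by (simp add: sg_def mult.commute)
  have ahi: "alpha (2^m+i) = (1-\<i>) * beta i" if "i < 2^m" for i
  proof -
    have "(\<Prod>j<m. 1 + w j * sg (zbit (2^m+i) j)) = beta i"
      unfolding beta_def using zbit_high_low[OF that] by (intro prod.cong) auto
    then show ?thesis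
      unfolding alpha_def pm using zbit_high[OF that] wm by (simp add: sg_def mult.commute)
  qed
  have hadc: "complex_of_real (hadamard m r i) = (\<Prod>j<m. sg (zbit i j \<and> zbit r j))" for r i
    unfolding hadamard_def using sg_card[of m "\<lambda>j. zbit i j \<and> zbit r j"] by (simp add: conj_commute)
  have bsum: "(\<Sum>i<2^m. beta i * (\<Prod>j<m. sg (zbit i j \<and> zbit r j))) = 2^m * (\<Prod>j<m. if zbit r j then w j else 1)" for r
    unfolding beta_def by (rule key_identity)
  have nprod: "norm (\<Prod>j<m. if zbit r j then w j else 1) = 1" for r
    unfolding prod_norm[symmetric] by (rule prod.neutral) (simp add: w_def)
  have n1i: "norm (1 + \<i>) = sqrt 2" "norm (1 - \<i>) = sqrt 2"
    by (simp_all add: cmod_def)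
  show ?thesis
    unfolding gen_bent_def
  proof
    fix u assume u: "u \<in> cube n"
    obtain r \<epsilon> where r: "r < 2^(p-1)" and eps: "\<epsilon> \<in> {1, -1::real}" and
      cases: "(\<forall>i<2 ^ (p - 1). walsh n (g i) u = \<epsilon> * sqrt 2 * hadamard (p - 1) r i
                          \<and> walsh n (g (2 ^ (p - 1) + i)) u = 0)
       \<or> (\<forall>i<2 ^ (p - 1). walsh n (g i) u = 0
                          \<and> walsh n (g (2 ^ (p - 1) + i)) u = \<epsilon> * sqrt 2 * hadamard (p - 1) r i)"
      using spectrum u by blast
    have pm1: "p - 1 = m" using pm by simp
    have ne: "norm (complex_of_real \<epsilon>) = 1" using eps by auto
    have gw: "gen_walsh (2^(p+1)) n f u = (1/2^p) * (\<Sum>i<2^p. alpha i * complex_of_real (walsh n (g i) u))"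
      by (rule gw_formula) (rule pw)
    also have "\<dots> = (1/2^p) * ((1+\<i>) * (\<Sum>i<2^m. beta i * complex_of_real (walsh n (g i) u))
          + (1-\<i>) * (\<Sum>i<2^m. beta i * complex_of_real (walsh n (g (2^m+i)) u)))"
    proof -
      have e: "(2::nat)^p = 2^m + 2^m" using pm by simp
      have "(\<Sum>i<2^p. alpha i * complex_of_real (walsh n (g i) u))
         = (\<Sum>i<2^m. alpha i * complex_of_real (walsh n (g i) u))
           + (\<Sum>i<2^m. alpha (2^m+i) * complex_of_real (walsh n (g (2^m+i)) u))"
        unfolding e by (rule sum_split_add)
      also have "\<dots> = (1+\<i>) * (\<Sum>i<2^m. beta i * complex_of_real (walsh n (g i) u))
          + (1-\<i>) * (\<Sum>i<2^m. beta i * complex_of_real (walsh n (g (2^m+i)) u))"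
        unfolding sum_distrib_left by (intro arg_cong2[where f="(+)"] sum.cong) (simp_all add: alo ahi)
      finally show ?thesis by simp
    qed
    finally have G: "gen_walsh (2^(p+1)) n f u = \<dots>" .
    have S: "(\<Sum>i<2^m. beta i * complex_of_real (\<epsilon> * sqrt 2 * hadamard m r i))
       = complex_of_real \<epsilon> * sqrt 2 * (2^m * (\<Prod>j<m. if zbit r j then w j else 1))"
      by (simp add: hadc bsum[symmetric] sum_distrib_left ac_simps)
    have nS: "norm (complex_of_real \<epsilon> * sqrt 2 * (2^m * (\<Prod>j<m. if zbit r j then w j else 1))) = sqrt 2 * 2^m"
    proof -
      have "\<bar>\<epsilon>\<bar> = 1" using eps by auto
      moreover have "cmod (2 ^ m) = (2::real) ^ m" by (simp add: norm_power)
      ultimately show ?thesis by (simp add: norm_mult nprod)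
    qed
    from cases show "cmod (gen_walsh (2 ^ (p + 1)) n f u) = 1"
    proof
      assume c: "\<forall>i<2 ^ (p - 1). walsh n (g i) u = \<epsilon> * sqrt 2 * hadamard (p - 1) r i
                          \<and> walsh n (g (2 ^ (p - 1) + i)) u = 0"
      have "gen_walsh (2^(p+1)) n f u = (1/2^p) * ((1+\<i>) * (complex_of_real \<epsilon> * sqrt 2 * (2^m * (\<Prod>j<m. if zbit r j then w j else 1))))"
        unfolding G S[symmetric] using c unfolding pm1 by simp
      then show ?thesis using fin_norm[OF n1i(1) nS] unfolding pm by metis
    next
      assume c: "\<forall>i<2 ^ (p - 1). walsh n (g i) u = 0
                          \<and> walsh n (g (2 ^ (p - 1) + i)) u = \<epsilon> * sqrt 2 * hadamard (p - 1) r i"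
      have "gen_walsh (2^(p+1)) n f u = (1/2^p) * ((1-\<i>) * (complex_of_real \<epsilon> * sqrt 2 * (2^m * (\<Prod>j<m. if zbit r j then w j else 1))))"
        unfolding G S[symmetric] using c unfolding pm1 by simp
      then show ?thesis using fin_norm[OF n1i(2) nS] unfolding pm by metis
    qed
  qed
qed

end
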